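(* Let $n\ge1$ and let $G,G'$ be canonical weighted voting games on players $N=\{1,\dots,n\}$ such that $G'$ covers $G$ in the poset $(\mathcal{G}_{\mathsf{cwvg}}(n),\preceq_{\mathsf{MWC}})$, i.e., $W_{\min,G}\subset W_{\min,G'}$ and $|W_{\min,G'}|=|W_{\min,G}|+1$. Let $L_{\mathsf{ceil},G}$ be the set of ceiling coalitions of $G$. Then there exist $C\in L_{\mathsf{ceil},G}$ and an integer $i$ with $0\le i\le n$ such that $\mathsf{rtrunc}(C,i)$ is defined and $W_{\min,G'}=W_{\min,G}\cup\{\mathsf{rtrunc}(C,i)\}$.
   Context: A simple game on $N$ is a function $v:2^N\to\{0,1\}$ (all-losing allowed). $W_{\min,G}$ is the set of minimal winning coalitions (winning $S$ with every $S\setminus\{i\}$, $i\in S$, losing); maximal losing coalitions are losing $S$ with every $S\cup\{i\}$, $i\notin S$, winning. A weighted voting game has $q\ge0$, $w_i\ge0$ with $v(S)=1\iff\sum_{i\in S}w_i\ge q$. Write $i\succeq j$ if $v(S\cup\{i\})\ge v(S\cup\{j\})$ for all $S\subseteq N\setminus\{i,j\}$; a canonical weighted voting game is a weighted voting game with $1\succeq\cdots\succeq n$. A coalition $S'$ is a direct left-shift of $S$ if there is $i\in S$ with $2\le i\le n$, $i-1\notin S$ and $S'=(S\setminus\{i\})\cup\{i-1\}$; a left-shift of $S$ is a coalition obtained from $S$ by one or more successive direct left-shifts. A ceiling coalition is a maximal losing coalition all of whose left-shifts are winning. For a coalition $S$: $\mathsf{rtrunc}(S,0)=S$; for $0<i\le|S|$,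 $\mathsf{rtrunc}(S,i)$ is $S$ with its $i$ highest-numbered players removed; undefined for $i>|S|$. *)

theory Defs
  imports Complex_Main
begin

text \<open>Players are N = {1..n}; a simple game is a predicate v on coalitions
  (only its values on subsets of {1..n} are relevant).\<close>

definition players :: "nat \<Rightarrow> nat set" where
  "players n = {1..n}"

definition weighted_voting_game :: "nat \<Rightarrow> (nat set \<Rightarrow> bool) \<Rightarrow> bool" where
  "weighted_voting_game n v \<longleftrightarrow>
     (\<exists>(q::real) (w::nat \<Rightarrow> real). q \<ge> 0 \<and> (\<forall>i\<in>players n. w i \<ge> 0) \<and>
        (\<forall>S. S \<subseteq> players n \<longrightarrow> (v S \<longleftrightarrow> (\<Sum>i\<in>S. w i) \<ge> q)))"

definition desirable :: "nat \<Rightarrow> (nat set \<Rightarrow> bool) \<Rightarrow> nat \<Rightarrow> nat \<Rightarrow> bool" where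
  "desirable n v i j \<longleftrightarrow>
     (\<forall>S. S \<subseteq> players n - {i, j} \<longrightarrow> (v (S \<union> {j}) \<longrightarrow> v (S \<union> {i})))"

definition canonical_wvg :: "nat \<Rightarrow> (nat set \<Rightarrow> bool) \<Rightarrow> bool" where
  "canonical_wvg n v \<longleftrightarrow> weighted_voting_game n v \<and>
     (\<forall>i. 1 \<le> i \<and> i < n \<longrightarrow> desirable n v i (i + 1))"

definition min_winning :: "nat \<Rightarrow> (nat set \<Rightarrow> bool) \<Rightarrow> nat set set" where
  "min_winning n v = {S. S \<subseteq> players n \<and> v S \<and> (\<forall>i\<in>S. \<not> v (S - {i}))}"

definition max_losing :: "nat \<Rightarrow> (nat set \<Rightarrow> bool) \<Rightarrow> nat set \<Rightarrow> bool" where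
  "max_losing n v S \<longleftrightarrow> S \<subseteq> players n \<and> \<not> v S \<and> (\<forall>i\<in>players n - S. v (S \<union> {i}))"

definition direct_left_shift :: "nat \<Rightarrow> nat set \<Rightarrow> nat set \<Rightarrow> bool" where
  "direct_left_shift n S S' \<longleftrightarrow>
     (\<exists>i\<in>S. 2 \<le> i \<and> i \<le> n \<and> i - 1 \<notin> S \<and> S' = (S - {i}) \<union> {i - 1})"

definition left_shift :: "nat \<Rightarrow> nat set \<Rightarrow> nat set \<Rightarrow> bool" where
  "left_shift n = (direct_left_shift n)\<^sup>+\<^sup>+"

definition ceiling_coalitions :: "nat \<Rightarrow> (nat set \<Rightarrow> bool) \<Rightarrow> nat set set" where
  "ceiling_coalitions n v =
     {C. max_losing n v C \<and> (\<forall>S'. left_shift n C S' \<longrightarrow> v S')}"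

text \<open>rtrunc S i: remove the i highest-numbered players of S
  (meaningful only when i \<le> card S).\<close>
definition rtrunc :: "nat set \<Rightarrow> nat \<Rightarrow> nat set" where
  "rtrunc S i = {x\<in>S. i \<le> card {y\<in>S. x < y}}"

end

theory Submission
  imports Defs
begin
lemma wvg_mono:
  assumes "weighted_voting_game n v" "S \<subseteq> T" "T \<subseteq> players n" "v S"
  shows "v T"
proof -
  obtain q w where q: "q \<ge> (0::real)" and w: "\<forall>i\<in>players n. w i \<ge> 0"
    and e: "\<forall>S. S \<subseteq> players n \<longrightarrow> (v S \<longleftrightarrow> (\<Sum>i\<in>S. w i) \<ge> q)"
    using assms(1) unfolding weighted_voting_game_def by blast
  have fT: "finite T" using assms(3) finite_subset unfolding players_def by blast
  have "(\<Sum>i\<in>S. w i) \<le> (\<Sum>i\<in>T. w i)"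
    by (rule sum_mono2[OF fT assms(2)]) (use w assms(3) in auto)
  moreover have "(\<Sum>i\<in>S. w i) \<ge> q" using e assms by blast
  ultimately show ?thesis using e assms(3) by auto
qed


lemma desirable_trans:
  assumes "desirable n v i j" "desirable n v j l" "i \<noteq> j" "j \<noteq> l" "i \<noteq> l"
    "i \<in> players n" "l \<in> players n"
  shows "desirable n v i l"
  unfolding desirable_def
proof (intro allI impI)
  fix S assume S: "S \<subseteq> players n - {i, l}" and vl: "v (S \<union> {l})"
  show "v (S \<union> {i})"
  proof (cases "j \<in> S")
    case False
    have "v (S \<union> {j})" using assms(2) S False vl unfolding desirable_def by blast
    then show ?thesis using assms(1) S False unfolding desirable_def by blast
  next
    case True
    define S0 where "S0 = S - {j}"
    have "S0 \<union> {l} \<subseteq> players n - {i, j}" using S assms unfolding S0_def by auto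
    moreover have "v ((S0 \<union> {l}) \<union> {j})" using vl True unfolding S0_def
      by (metis Un_insert_right insert_Diff insert_commute sup_bot.right_neutral)
    ultimately have "v ((S0 \<union> {l}) \<union> {i})" using assms(1) unfolding desirable_def by blast
    moreover have "S0 \<union> {i} \<subseteq> players n - {j, l}" using S assms unfolding S0_def by auto
    ultimately have "v ((S0 \<union> {i}) \<union> {j})" using assms(2) unfolding desirable_def
      by (metis Un_insert_right insert_commute sup_bot.right_neutral)
    then show ?thesis using True unfolding S0_def
      by (metis Un_insert_right insert_Diff insert_commute sup_bot.right_neutral)
  qed
qed


lemma canon_desirable:
  assumes "canonical_wvg n v" "1 \<le> i"
  shows "i < j \<Longrightarrow> j \<le> n \<Longrightarrow> desirable n v i j"
proof (induction j)
  case 0 then show ?case by simp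
next
  case (Suc j)
  show ?case
  proof (cases "j = i")
    case True then show ?thesis using assms Suc.prems unfolding canonical_wvg_def by auto
  next
    case False
    then have a: "desirable n v i j" using Suc by simp
    have b: "desirable n v j (j+1)" using assms Suc.prems False unfolding canonical_wvg_def by auto
    show ?thesis using desirable_trans[OF a b] Suc.prems False assms unfolding players_def by auto
  qed
qed

lemma exists_min_winning:
  assumes "S \<subseteq> players n" "v S"
  shows "\<exists>T\<subseteq>S. T \<in> min_winning n v"
proof -
  have "\<exists>T. (T \<subseteq> S \<and> v T) \<and> (\<forall>T'. T' \<subseteq> S \<and> v T' \<longrightarrow> card T \<le> card T')"
    by (rule ex_has_least_nat[of "\<lambda>T. T \<subseteq> S \<and> v T" S card]) (simp add: assms(2))
  then obtain T where T: "T \<subseteq> S" "v T" and m: "\<And>T'. T' \<subseteq> S \<Longrightarrow> v T' \<Longrightarrow> card T \<le> card T'"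
    by blast
  have fT: "finite T" using T assms finite_subset unfolding players_def by (metis finite_atLeastAtMost)
  have "\<forall>i\<in>T. \<not> v (T - {i})"
  proof (intro ballI notI)
    fix i assume i: "i \<in> T" "v (T - {i})"
    then have "card T \<le> card (T - {i})" using m T by blast
    moreover have "card (T - {i}) < card T" using fT i(1) by (rule card_Diff1_less)
    ultimately show False by simp
  qed
  then show ?thesis using T assms unfolding min_winning_def by blast
qed

theorem theorem10:
  fixes n :: nat and v v' :: "nat set \<Rightarrow> bool"
  assumes "n \<ge> 1"
    and "canonical_wvg n v" and "canonical_wvg n v'"
    and "min_winning n v \<subset> min_winning n v'"
    and "card (min_winning n v') = card (min_winning n v) + 1"
  shows "\<exists>C\<in>ceiling_coalitions n v. \<exists>i::nat. i \<le> n \<and> i \<le> card C \<and>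
           min_winning n v' = min_winning n v \<union> {rtrunc C i}"
proof -
  have wv: "weighted_voting_game n v" and wv': "weighted_voting_game n v'"
    using assms(2,3) unfolding canonical_wvg_def by auto
  have finP: "finite (players n)" unfolding players_def by simp
  obtain S where S': "S \<in> min_winning n v'" and Sn: "S \<notin> min_winning n v"
    using assms(4) by blast
  have finW: "finite (min_winning n v')"
    by (rule finite_subset[of _ "Pow (players n)"]) (auto simp: min_winning_def finP)
  have Weq: "min_winning n v' = min_winning n v \<union> {S}"
  proof (rule card_subset_eq[OF finW, symmetric])
    show "min_winning n v \<union> {S} \<subseteq> min_winning n v'" using assms(4) S' by blast
    have "finite (min_winning n v)" using assms(4) finW finite_subset by blast
    then show "card (min_winning n v \<union> {S}) = card (min_winning n v')"
      using Sn assms(5) by simp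
  qed
  have SP: "S \<subseteq> players n" and vS': "v' S" and Smin: "\<And>x. x \<in> S \<Longrightarrow> \<not> v' (S - {x})"
    using S' unfolding min_winning_def by auto
  have winv: "v X" if h: "X \<subseteq> players n" "v' X" "\<not> S \<subseteq> X" for X
  proof -
    obtain T where T: "T \<subseteq> X" "T \<in> min_winning n v'" using exists_min_winning[of X n v', OF h(1,2)] by blast
    have "T \<noteq> S" using T(1) h(3) by auto
    then have "T \<in> min_winning n v" using T(2) Weq by auto
    then have "v T" unfolding min_winning_def by blast
    then show ?thesis using wvg_mono[OF wv T(1) h(1)] by blast
  qed
  have vimp: "v' X" if h: "X \<subseteq> players n" "v X" for X
  proof -
    obtain T where T: "T \<subseteq> X" "T \<in> min_winning n v" using exists_min_winning[of X n v, OF h(1,2)] by blast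
    then have "T \<in> min_winning n v'" using Weq by auto
    then have "v' T" unfolding min_winning_def by auto
    then show ?thesis using wvg_mono[OF wv' T(1) h(1)] by blast
  qed
  have nvS: "\<not> v S"
  proof
    assume "v S"
    then obtain T where T: "T \<subseteq> S" "T \<in> min_winning n v" using exists_min_winning[of S n v, OF SP] by blast
    have "T \<noteq> S" using T Sn by blast
    then obtain x where x: "x \<in> S" "x \<notin> T" using T by blast
    have "T \<in> min_winning n v'" using T Weq by auto
    then have "v' T" unfolding min_winning_def by auto
    have "T \<subseteq> S - {x}" "S - {x} \<subseteq> players n" using T x SP by auto
    then have "v' (S - {x})" using wvg_mono[OF wv' _ _ \<open>v' T\<close>] by blast
    then show False using Smin x by blast
  qed
  have shiftS: "v ((S - {x}) \<union> {j})" if "x \<in> S" "1 \<le> j" "j < x" "j \<notin> S" for x j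
  proof -
    have xn: "x \<le> n" using that SP unfolding players_def by auto
    have d: "desirable n v' j x" using canon_desirable[OF assms(3) that(2,3) xn] .
    have "S - {x} \<subseteq> players n - {j, x}" using SP that by auto
    moreover have "v' ((S - {x}) \<union> {x})" using vS' that(1)
      by (metis Un_insert_right insert_Diff sup_bot.right_neutral)
    ultimately have a2: "v' ((S - {x}) \<union> {j})" using d unfolding desirable_def by blast
    have a1: "(S - {x}) \<union> {j} \<subseteq> players n" using SP that xn unfolding players_def by auto
    have a3: "\<not> S \<subseteq> (S - {x}) \<union> {j}" using that by auto
    show ?thesis by (rule winv[OF a1 a2 a3])
  qed
  define m where "m = (if S = {} then 0 else Max S)"
  have finS: "finite S" using SP finP finite_subset by blast
  have Sm: "S \<subseteq> {1..m}" using SP finS unfolding m_def players_def by auto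
  have mS: "S \<noteq> {} \<Longrightarrow> m \<in> S" unfolding m_def using finS by auto
  have mn: "m \<le> n"
  proof (cases "S = {}")
    case False
    then have "m \<in> S" by (rule mS)
    then show ?thesis using SP unfolding players_def by auto
  qed (simp add: m_def)
  define f :: "nat set \<Rightarrow> nat" where "f Y = (\<Sum>x\<in>Y. 2 ^ (n - x))" for Y
  define K where "K = {Y. Y \<subseteq> {m<..n} \<and> \<not> v (S \<union> Y)}"
  have eK: "{} \<in> K" unfolding K_def using nvS by simp
  have finK: "finite K" unfolding K_def by (rule finite_subset[of _ "Pow {m<..n}"]) auto
  have fKne: "f ` K \<noteq> {}" using eK by blast
  have "Max (f ` K) \<in> f ` K" using finK fKne by (intro Max_in) auto
  then obtain X where XK: "X \<in> K" and fX: "f X = Max (f ` K)" by auto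
  have Xmax: "v (S \<union> Y)" if "Y \<subseteq> {m<..n}" "f X < f Y" for Y
  proof (rule ccontr)
    assume "\<not> v (S \<union> Y)"
    then have "Y \<in> K" unfolding K_def using that by blast
    then have "f Y \<le> Max (f ` K)" using finK by simp
    then show False using that fX by simp
  qed
  have Xsub: "X \<subseteq> {m<..n}" and nvC': "\<not> v (S \<union> X)" using XK unfolding K_def by auto
  have finX: "finite X" using Xsub finite_subset by blast
  define C where "C = S \<union> X"
  have nvC: "\<not> v C" using nvC' unfolding C_def .
  have SX: "S \<inter> X = {}" using Sm Xsub by fastforce
  have CP: "C \<subseteq> players n" unfolding C_def using SP Xsub mn unfolding players_def by auto
  have fadd: "f X < f (X \<union> {j})" if "j \<notin> X" for j
    using that finX unfolding f_def by simp
  have fshift: "f X < f ((X - {x}) \<union> {x - 1})" if "x \<in> X" "x - 1 \<notin> X" "1 \<le> x" "x \<le> n" for x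
  proof -
    have e1: "f X = f (X - {x}) + 2 ^ (n - x)" unfolding f_def using that finX
      by (simp add: sum.remove)
    have e2: "f ((X - {x}) \<union> {x - 1}) = f (X - {x}) + 2 ^ (n - (x - 1))" unfolding f_def
      using that finX by simp
    have "n - (x - 1) = Suc (n - x)" using that by simp
    then have "(2::nat) ^ (n - x) < 2 ^ (n - (x - 1))" by simp
    then show ?thesis using e1 e2 by simp
  qed
  have ml: "max_losing n v C"
    unfolding max_losing_def
  proof (intro conjI ballI)
    show "C \<subseteq> players n" by (rule CP)
    show "\<not> v C" by (rule nvC)
    fix i assume i: "i \<in> players n - C"
    then have i1: "1 \<le> i" "i \<le> n" "i \<notin> S" "i \<notin> X" unfolding players_def C_def by auto
    have CiP: "C \<union> {i} \<subseteq> players n" using CP i by auto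
    show "v (C \<union> {i})"
    proof (cases "i < m")
      case True
      then have Sne: "S \<noteq> {}" unfolding m_def by auto
      have "v ((S - {m}) \<union> {i})" using shiftS[OF mS[OF Sne] i1(1) True i1(3)] .
      moreover have "(S - {m}) \<union> {i} \<subseteq> C \<union> {i}" unfolding C_def by auto
      ultimately show ?thesis using wvg_mono[OF wv, of "(S - {m}) \<union> {i}" "C \<union> {i}"] CiP by simp
    next
      case False
      have "i \<noteq> m"
      proof
        assume im: "i = m"
        then have "S = {}" using mS i1(3) by blast
        then show False using im i1(1) unfolding m_def by simp
      qed
      then have "m < i" using False by simp
      then have "X \<union> {i} \<subseteq> {m<..n}" using Xsub i1 by auto
      then have "v (S \<union> (X \<union> {i}))" using Xmax fadd[OF i1(4)] by blast
      then show ?thesis unfolding C_def by (simp add: Un_assoc)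
    qed
  qed
  have dshiftC: "v D \<and> D \<subseteq> players n" if h: "direct_left_shift n C D" for D
  proof -
    obtain x where x: "x \<in> C" "2 \<le> x" "x \<le> n" "x - 1 \<notin> C" and D: "D = (C - {x}) \<union> {x - 1}"
      using h unfolding direct_left_shift_def by blast
    have DP: "D \<subseteq> players n" using D CP x unfolding players_def by auto
    show ?thesis
    proof (cases "x \<in> S")
      case xS: True
      have x1S: "x - 1 \<notin> S" using x(4) unfolding C_def by blast
      have x11: "1 \<le> x - 1" "x - 1 < x" using x(2) by auto
      have a: "v ((S - {x}) \<union> {x - 1})" by (rule shiftS[OF xS x11 x1S])
      have b: "(S - {x}) \<union> {x - 1} \<subseteq> D" using D unfolding C_def by auto
      have "v D" by (rule wvg_mono[OF wv b DP a])
      then show ?thesis using DP by blast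
    next
      case xnS: False
      then have xX: "x \<in> X" using x(1) unfolding C_def by blast
      then have mx: "m < x" using Xsub by auto
      have x1X: "x - 1 \<notin> X" "x - 1 \<notin> S" using x(4) unfolding C_def by auto
      have "x - 1 \<noteq> m"
      proof
        assume "x - 1 = m"
        then have "S = {}" using mS x1X(2) by auto
        then have "m = 0" unfolding m_def by simp
        then show False using \<open>x - 1 = m\<close> x(2) by simp
      qed
      then have Ysub: "(X - {x}) \<union> {x - 1} \<subseteq> {m<..n}" using mx Xsub x by auto
      have "v (S \<union> ((X - {x}) \<union> {x - 1}))"
        using Xmax[OF Ysub] fshift[OF xX x1X(1)] x by simp
      moreover have "S \<union> ((X - {x}) \<union> {x - 1}) = D" using D xnS unfolding C_def by auto
      ultimately show ?thesis using DP by simp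
    qed
  qed
  have lsC: "v D" if "left_shift n C D" for D
  proof -
    have "v D \<and> D \<subseteq> players n" using that[unfolded left_shift_def]
    proof (induction rule: tranclp_induct)
      case (base y) then show ?case using dshiftC by blast
    next
      case (step y z)
      obtain x where x: "x \<in> y" "2 \<le> x" "x \<le> n" "x - 1 \<notin> y" and z: "z = (y - {x}) \<union> {x - 1}"
        using step(2) unfolding direct_left_shift_def by blast
      have "1 \<le> x - 1 \<and> x - 1 < n" using x by auto
      then have "desirable n v (x - 1) (x - 1 + 1)" using assms(2) unfolding canonical_wvg_def by blast
      moreover have "x - 1 + 1 = x" using x(2) by simp
      ultimately have d: "desirable n v (x - 1) x" by simp
      have "y - {x} \<subseteq> players n - {x - 1, x}" using step x by auto
      moreover have "v ((y - {x}) \<union> {x})" using step x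
        by (metis Un_insert_right insert_Diff sup_bot.right_neutral)
      ultimately have "v z" using d z unfolding desirable_def by blast
      moreover have "z \<subseteq> players n" using z step x unfolding players_def by auto
      ultimately show ?case by blast
    qed
    then show ?thesis by blast
  qed
  have Cceil: "C \<in> ceiling_coalitions n v" unfolding ceiling_coalitions_def using ml lsC by blast
  have finC: "finite C" using CP finP finite_subset by blast
  have rt: "rtrunc C (card X) = S"
  proof -
    have "card X \<le> card {y\<in>C. x < y}" if "x \<in> S" for x
    proof -
      have "X \<subseteq> {y\<in>C. x < y}" using that Sm Xsub unfolding C_def by force
      then show ?thesis by (rule card_mono[rotated]) (use finC in auto)
    qed
    moreover have "\<not> card X \<le> card {y\<in>C. x < y}" if "x \<in> X" for x
    proof -
      have "{y\<in>C. x < y} \<subset> X" using that Sm Xsub unfolding C_def by force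
      then have "card {y\<in>C. x < y} < card X" using finX by (rule psubset_card_mono[rotated])
      then show ?thesis by simp
    qed
    ultimately show ?thesis unfolding rtrunc_def C_def by auto
  qed
  have cardC: "card X \<le> card C" by (rule card_mono[OF finC]) (auto simp: C_def)
  have cardn: "card X \<le> n"
  proof -
    have "card X \<le> card {m<..n}" by (rule card_mono[OF _ Xsub]) simp
    then show ?thesis by simp
  qed
  show ?thesis
    using Cceil rt cardC cardn Weq by (intro bexI[of _ C] exI[of _ "card X"]) auto
qed

end
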